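(* The generalized $\mathbb Z^d$ beach model satisfies condition $\mho$. That is: let $A=A_0\uplus A_1$ and $B$ be finite sets with $A_0\neq\emptyset$, let $S=A\times B$, write $s=(\alpha(s),\beta(s))$, and let $X=\{x\in S^{\mathbb Z^d}:\forall n\in\mathbb Z^d,\ 1\le i\le d,\ (\alpha(x_n)\in A_0\text{ and }\alpha(x_{n+e_i})\in A_0)\text{ or }\beta(x_n)=\beta(x_{n+e_i})\}$. Then there is a finite $F\subset\mathbb Z^d$ such that for every $a\in X_F$ the subgroup of $\mathbb Z^S$ generated by $\{\Psi_\sharp(a,b):b\in X_F,\ a_{\partial F}=b_{\partial F}\}$ equals $\mathbb H_{X,\sharp}$.
   Context: $e_1,\dots,e_d$ are the standard unit vectors of $\mathbb Z^d$. Notation: $\|n\|=\max_k|n_k|$, $B(n,r)=\{k:\|k-n\|\le r\}$, $F^o=\{x\in F:B(x,1)\subset F\}$, $\partial F=F\setminus F^o$; $x_\Lambda$ restriction, $X_\Lambda=\{x_\Lambda:x\in X\}$. Tail relation $\mathfrak T(X)=\{(x,y)\in X^2:\exists F\text{ finite},x_{F^c}=y_{F^c}\}$. $\sharp:S\to\mathbb Z^S$, $\sharp(s)=e_s$ (standard basis vector of $\mathbb Z^S$); $\Psi_\sharp(x,y)=\sum_j(e_{y_j}-e_{x_j})$ on $\mathfrak T(X)$; for finite $F$ and $a,b\in X_F$, $\Psi_\sharp(a,b)=\sum_{j\in F}(e_{b_j}-e_{a_j})$; $\mathbb H_{X,\sharp}$ is the subgroup generated by $\{\Psi_\sharp(x,y):(x,y)\in\mathfrak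 T(X)\}$. *)

theory Defs
  imports Main "HOL-Library.Function_Algebras" "HOL-Computational_Algebra.Group_Closure"
begin

text \<open>Points of Z^d are functions 'd => int, where 'd is a finite index type with CARD('d) = d.\<close>

definition unitvec :: "'d \<Rightarrow> ('d \<Rightarrow> int)" where
  "unitvec i = (\<lambda>j. if j = i then 1 else 0)"

definition supnorm :: "('d::finite \<Rightarrow> int) \<Rightarrow> int" where
  "supnorm n = Max (range (\<lambda>k. \<bar>n k\<bar>))"

definition nball :: "('d::finite \<Rightarrow> int) \<Rightarrow> int \<Rightarrow> ('d \<Rightarrow> int) set" where
  "nball n r = {k. supnorm (k - n) \<le> r}"

definition interior_set :: "('d::finite \<Rightarrow> int) set \<Rightarrow> ('d \<Rightarrow> int) set" where
  "interior_set F = {x \<in> F. nball x 1 \<subseteq> F}"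

definition bdry :: "('d::finite \<Rightarrow> int) set \<Rightarrow> ('d \<Rightarrow> int) set" where
  "bdry F = F - interior_set F"

text \<open>Restriction x_Lambda (undefined outside Lambda) and the set X_Lambda.\<close>
definition restr :: "('n \<Rightarrow> 's) \<Rightarrow> 'n set \<Rightarrow> ('n \<Rightarrow> 's)" where
  "restr x L = (\<lambda>n. if n \<in> L then x n else undefined)"

definition patterns :: "('n \<Rightarrow> 's) set \<Rightarrow> 'n set \<Rightarrow> ('n \<Rightarrow> 's) set" where
  "patterns X L = (\<lambda>x. restr x L) ` X"

definition tail_rel :: "('n \<Rightarrow> 's) set \<Rightarrow> (('n \<Rightarrow> 's) \<times> ('n \<Rightarrow> 's)) set" where
  "tail_rel X = {(x, y). x \<in> X \<and> y \<in> X \<and> (\<exists>F. finite F \<and> (\<forall>n. n \<notin> F \<longrightarrow> x n = y n))}"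

definition sharp :: "'s \<Rightarrow> ('s \<Rightarrow> int)" where
  "sharp s = (\<lambda>t. if t = s then 1 else 0)"

definition Psi_pat :: "'n set \<Rightarrow> ('n \<Rightarrow> 's) \<Rightarrow> ('n \<Rightarrow> 's) \<Rightarrow> ('s \<Rightarrow> int)" where
  "Psi_pat F a b = (\<Sum>j\<in>F. sharp (b j) - sharp (a j))"

definition Psi :: "('n \<Rightarrow> 's) \<Rightarrow> ('n \<Rightarrow> 's) \<Rightarrow> ('s \<Rightarrow> int)" where
  "Psi x y = (\<Sum>j\<in>{j. x j \<noteq> y j}. sharp (y j) - sharp (x j))"

definition H_group :: "('n \<Rightarrow> 's) set \<Rightarrow> ('s \<Rightarrow> int) set" where
  "H_group X = group_closure {Psi x y | x y. (x, y) \<in> tail_rel X}"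

definition beach :: "'a set \<Rightarrow> 'a set \<Rightarrow> 'b set \<Rightarrow> (('d::finite \<Rightarrow> int) \<Rightarrow> 'a \<times> 'b) set" where
  "beach A A0 B = {x. (\<forall>n. x n \<in> A \<times> B) \<and>
     (\<forall>n i. (fst (x n) \<in> A0 \<and> fst (x (n + unitvec i)) \<in> A0) \<or> snd (x n) = snd (x (n + unitvec i)))}"

end

theory Submission
  imports Defs "HOL-Library.FuncSet"
begin

lemma gc_sub:
  fixes S T :: "'x::ab_group_add set"
  assumes "S \<subseteq> group_closure T"
  shows "group_closure S \<subseteq> group_closure T"
proof
  fix s assume "s \<in> group_closure S"
  then show "s \<in> group_closure T"
    by induction (use assms in \<open>auto intro: group_closure.diff\<close>)
qed

lemma gc_sum:
  fixes f :: "'i \<Rightarrow> 'x::ab_group_add"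
  assumes "\<And>j. j \<in> D \<Longrightarrow> f j \<in> group_closure T"
  shows "sum f D \<in> group_closure T"
  using assms
proof (induction D rule: infinite_finite_induct)
  case (insert x F) then show ?case by (auto intro: group_closure_add)
qed auto

lemma supnorm_le: "supnorm (n::'d::finite \<Rightarrow> int) \<le> r \<longleftrightarrow> (\<forall>i. \<bar>n i\<bar> \<le> r)"
  unfolding supnorm_def by (subst Max_le_iff) auto

lemma supnorm_ge0: "0 \<le> supnorm (n::'d::finite \<Rightarrow> int)"
  unfolding supnorm_def by (rule order_trans[OF _ Max_ge[of _ "\<bar>n undefined\<bar>"]]) auto

lemma supnorm_unit_add: "supnorm ((n::'d::finite \<Rightarrow> int) + unitvec i) \<le> supnorm n + 1"
  unfolding supnorm_le[of _ "supnorm n + 1"]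
proof
  fix j
  have "\<bar>n j\<bar> \<le> supnorm n" using supnorm_le by blast
  then show "\<bar>(n + unitvec i) j\<bar> \<le> supnorm n + 1" by (auto simp: unitvec_def)
qed

lemma supnorm_unit_sub: "supnorm (n::'d::finite \<Rightarrow> int) \<le> supnorm (n + unitvec i) + 1"
  unfolding supnorm_le[of _ "supnorm (n + unitvec i) + 1"]
proof
  fix j
  have "\<bar>(n + unitvec i) j\<bar> \<le> supnorm (n + unitvec i)" using supnorm_le by blast
  then show "\<bar>n j\<bar> \<le> supnorm (n + unitvec i) + 1" by (auto simp: unitvec_def split: if_splits)
qed

lemma supnorm_unit: "supnorm (unitvec i :: 'd::finite \<Rightarrow> int) \<le> 1"
  unfolding supnorm_le by (auto simp: unitvec_def)

lemma supnorm_0: "supnorm n = 0 \<longleftrightarrow> n = (0::'d::finite \<Rightarrow> int)"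
proof
  assume "supnorm n = 0" then have "\<forall>i. \<bar>n i\<bar> \<le> 0" using supnorm_le[of n 0] by simp
  then show "n = 0" by auto
qed (simp add: supnorm_def)

lemma finite_nball0: "finite {k::'d::finite \<Rightarrow> int. supnorm k \<le> r}"
proof -
  have "{k::'d \<Rightarrow> int. supnorm k \<le> r} \<subseteq> PiE UNIV (\<lambda>_. {-r..r})"
    by (auto simp: supnorm_le abs_le_iff PiE_iff, metis minus_le_iff)
  moreover have "finite (PiE (UNIV::'d set) (\<lambda>_. {-r..r}))" by (rule finite_PiE) auto
  ultimately show ?thesis by (rule finite_subset)
qed


lemma supnorm_unit_neg: "supnorm (- unitvec i :: 'd::finite \<Rightarrow> int) \<le> 1"
  unfolding supnorm_le by (auto simp: unitvec_def)

lemma unitvec_nz: "unitvec i \<noteq> (0::'d::finite \<Rightarrow> int)"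
proof
  assume "unitvec i = (0::'d \<Rightarrow> int)"
  then have "unitvec i i = (0::int)" by simp
  then show False by (simp add: unitvec_def)
qed

lemma unitvec_nz2: "n + unitvec i = (0::'d::finite \<Rightarrow> int) \<Longrightarrow> n \<noteq> 0"
proof
  assume "n + unitvec i = 0" "n = 0"
  then have "(n + unitvec i) i = 0" "n i = 0" by simp_all
  then show False by (simp add: unitvec_def)
qed

theorem proposition3p3:
  fixes A A0 :: "'a set" and B :: "'b set"
  assumes "finite A" and "finite B" and "A0 \<subseteq> A" and "A0 \<noteq> {}"
  shows "\<exists>F :: ('d::finite \<Rightarrow> int) set. finite F \<and>
     (\<forall>a \<in> patterns (beach A A0 B :: (('d \<Rightarrow> int) \<Rightarrow> 'a \<times> 'b) set) F.
        group_closure {Psi_pat F a b | b. b \<in> patterns (beach A A0 B) F \<and> (\<forall>n \<in> bdry F. a n = b n)}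
        = H_group (beach A A0 B :: (('d \<Rightarrow> int) \<Rightarrow> 'a \<times> 'b) set))"
proof -
  define F :: "('d \<Rightarrow> int) set" where "F = {k. supnorm k \<le> 3}"
  define X where "X = (beach A A0 B :: (('d \<Rightarrow> int) \<Rightarrow> 'a \<times> 'b) set)"
  obtain a0 where a0: "a0 \<in> A0" using assms(4) by blast
  have a0A: "a0 \<in> A" using a0 assms(3) by blast
  have finF: "finite F" unfolding F_def by (rule finite_nball0)
  have int2: "n \<notin> bdry F" if "supnorm n \<le> 2" for n
  proof -
    have "n \<in> F" using that by (simp add: F_def)
    moreover have "nball n 1 \<subseteq> F"
    proof
      fix k assume "k \<in> nball n 1"
      then have "\<forall>j. \<bar>(k - n) j\<bar> \<le> 1" by (simp add: nball_def supnorm_le)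
      moreover have "\<forall>j. \<bar>n j\<bar> \<le> 2" using that by (simp add: supnorm_le)
      ultimately have "\<forall>j. \<bar>k j\<bar> \<le> 3"
      proof (intro allI)
        fix j assume "\<forall>j. \<bar>(k - n) j\<bar> \<le> 1" "\<forall>j. \<bar>n j\<bar> \<le> 2"
        then have "\<bar>k j - n j\<bar> \<le> 1" "\<bar>n j\<bar> \<le> 2" by auto
        then show "\<bar>k j\<bar> \<le> 3" by linarith
      qed
      then show "k \<in> F" by (simp add: F_def supnorm_le)
    qed
    ultimately show ?thesis by (simp add: bdry_def interior_set_def)
  qed
  have nbd: "n + unitvec i \<in> F" "n - unitvec i \<in> F" if "n \<in> F" "n \<notin> bdry F" for n i
  proof -
    have "nball n 1 \<subseteq> F" using that by (simp add: bdry_def interior_set_def)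
    moreover have "n + unitvec i \<in> nball n 1" using supnorm_unit[of i] by (simp add: nball_def)
    moreover have "n - unitvec i \<in> nball n 1" using supnorm_unit_neg[of i] by (simp add: nball_def)
    ultimately show "n + unitvec i \<in> F" "n - unitvec i \<in> F" by auto
  qed
  have zF: "0 \<in> F" by (simp add: F_def supnorm_def)
  have Xedge: "(fst (x n) \<in> A0 \<and> fst (x (n + unitvec i)) \<in> A0) \<or> snd (x n) = snd (x (n + unitvec i))"
    if "x \<in> X" for x n i using that by (simp add: X_def beach_def)
  have Xval: "x n \<in> A \<times> B" if "x \<in> X" for x n using that by (simp add: X_def beach_def)
  show ?thesis
  proof (intro exI conjI ballI)
    show "finite F" by (rule finF)
    fix a assume "a \<in> patterns (beach A A0 B :: (('d \<Rightarrow> int) \<Rightarrow> 'a \<times> 'b) set) F"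
    then obtain x where x: "x \<in> X" and ax: "a = restr x F" by (auto simp: patterns_def X_def)
    define G where "G = group_closure {Psi_pat F a b | b. b \<in> patterns X F \<and> (\<forall>n \<in> bdry F. a n = b n)}"
    have key: "sharp s - sharp s' \<in> G" if b0: "b0 \<in> B" and s: "s \<in> A \<times> B" "fst s \<in> A0 \<or> snd s = b0"
      and s': "s' \<in> A \<times> B" "fst s' \<in> A0 \<or> snd s' = b0" for b0 s s'
    proof -
      define y where "y t n = (if n = 0 then t else if supnorm n \<le> 1 then (a0, b0)
          else if supnorm n \<le> 2 then (a0, snd (x n)) else x n)" for t n
      have yX: "y t \<in> X" if t: "t \<in> A \<times> B" "fst t \<in> A0 \<or> snd t = b0" for t
      proof -
        have "y t n \<in> A \<times> B" for n using t Xval[OF x, of n] a0A b0 by (auto simp: y_def)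
        moreover have "(fst (y t n) \<in> A0 \<and> fst (y t (n + unitvec i)) \<in> A0) \<or> snd (y t n) = snd (y t (n + unitvec i))" for n i
        proof -
          have e: "(fst (x n) \<in> A0 \<and> fst (x (n + unitvec i)) \<in> A0) \<or> snd (x n) = snd (x (n + unitvec i))"
            by (rule Xedge[OF x])
          have 1: "supnorm (n + unitvec i) \<le> supnorm n + 1" by (rule supnorm_unit_add)
          have 2: "supnorm n \<le> supnorm (n + unitvec i) + 1" by (rule supnorm_unit_sub)
          have 3: "n = 0 \<Longrightarrow> n + unitvec i \<noteq> 0" using unitvec_nz[of i] by simp
          have 4: "n + unitvec i = 0 \<Longrightarrow> n \<noteq> 0" by (rule unitvec_nz2)
          have 5: "supnorm n = 0 \<longleftrightarrow> n = 0" "supnorm (n + unitvec i) = 0 \<longleftrightarrow> n + unitvec i = 0"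
            by (rule supnorm_0)+
          have 6: "0 \<le> supnorm n" "0 \<le> supnorm (n + unitvec i)" by (rule supnorm_ge0)+
          show ?thesis using e 1 2 3 4 5 6 t a0 unfolding y_def
              by (cases "n = 0"; cases "n + unitvec i = 0"; cases "supnorm n \<le> 2"; cases "supnorm (n + unitvec i) \<le> 2";
                  cases "supnorm n \<le> 1"; cases "supnorm (n + unitvec i) \<le> 1") auto
        qed
        ultimately show ?thesis by (simp add: X_def beach_def)
      qed
      have inG: "Psi_pat F a (restr (y t) F) \<in> G" if t: "t \<in> A \<times> B" "fst t \<in> A0 \<or> snd t = b0" for t
      proof -
        have "restr (y t) F \<in> patterns X F" using yX[OF t] by (auto simp: patterns_def)
        moreover have "\<forall>n \<in> bdry F. a n = restr (y t) F n"
        proof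
          fix n assume n: "n \<in> bdry F"
          then have "n \<in> F" by (simp add: bdry_def)
          moreover have "\<not> supnorm n \<le> 2" using int2 n by blast
          moreover have "n \<noteq> 0" using calculation(2) supnorm_0[of n] by auto
          ultimately show "a n = restr (y t) F n" by (simp add: ax restr_def y_def)
        qed
        ultimately show ?thesis unfolding G_def by (blast intro: group_closure.base)
      qed
      have "Psi_pat F a (restr (y s) F) - Psi_pat F a (restr (y s') F)
          = (\<Sum>j\<in>F. sharp (y s j) - sharp (y s' j))"
        unfolding Psi_pat_def sum_subtractf[symmetric] by (rule sum.cong) (auto simp: restr_def)
      also have "\<dots> = (\<Sum>j\<in>F. if j = 0 then sharp s - sharp s' else 0)"
        by (rule sum.cong) (auto simp: y_def)
      also have "\<dots> = sharp s - sharp s'" using zF finF by simp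
      finally have eq: "Psi_pat F a (restr (y s) F) - Psi_pat F a (restr (y s') F) = sharp s - sharp s'" .
      have "Psi_pat F a (restr (y s) F) - Psi_pat F a (restr (y s') F) \<in> G"
        using inG[OF s] inG[OF s'] unfolding G_def by (rule group_closure.diff)
      then show ?thesis unfolding eq .
    qed
    have all: "sharp s - sharp t \<in> G" if "s \<in> A \<times> B" "t \<in> A \<times> B" for s t
    proof -
      obtain al be where s: "s = (al, be)" by fastforce
      obtain al' be' where t: "t = (al', be')" by fastforce
      have be: "be \<in> B" "be' \<in> B" using that s t by auto
      have "sharp s - sharp (a0, be) \<in> G" using key[of be s "(a0,be)"] be that a0 a0A s by auto
      moreover have "sharp (a0, be) - sharp (a0, be') \<in> G" using key[of be "(a0,be)" "(a0,be')"] be a0 a0A by auto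
      moreover have "sharp (a0, be') - sharp t \<in> G" using key[of be' "(a0,be')" t] be that a0 a0A t by auto
      ultimately have "(sharp s - sharp (a0, be)) + (sharp (a0, be) - sharp (a0, be')) + (sharp (a0, be') - sharp t) \<in> G"
        unfolding G_def by (blast intro: group_closure_add)
      then show ?thesis by simp
    qed
    show "group_closure {Psi_pat F a b | b. b \<in> patterns (beach A A0 B) F \<and> (\<forall>n \<in> bdry F. a n = b n)}
        = H_group (beach A A0 B :: (('d \<Rightarrow> int) \<Rightarrow> 'a \<times> 'b) set)"
      unfolding X_def[symmetric] G_def[symmetric]
    proof
      show "H_group X \<subseteq> G" unfolding H_group_def G_def
      proof (rule gc_sub, rule subsetI)
        fix v assume "v \<in> {Psi x y | x y. (x, y) \<in> tail_rel X}"
        then obtain x' y' where v: "v = Psi x' y'" and xy: "(x', y') \<in> tail_rel X" by blast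
        have "x' \<in> X" "y' \<in> X" using xy by (auto simp: tail_rel_def)
        then have gen: "sharp (y' j) - sharp (x' j) \<in> G" for j using all Xval by blast
        show "v \<in> group_closure {Psi_pat F a b | b. b \<in> patterns X F \<and> (\<forall>n \<in> bdry F. a n = b n)}"
          unfolding v Psi_def by (rule gc_sum) (rule gen[unfolded G_def])
      qed
      show "G \<subseteq> H_group X" unfolding G_def H_group_def
      proof (rule gc_sub, rule subsetI)
        fix v assume "v \<in> {Psi_pat F a b | b. b \<in> patterns X F \<and> (\<forall>n \<in> bdry F. a n = b n)}"
        then obtain b where v: "v = Psi_pat F a b" and b: "b \<in> patterns X F" and bd: "\<forall>n \<in> bdry F. a n = b n"
          by blast
        obtain y where y: "y \<in> X" and yb: "b = restr y F" using b by (auto simp: patterns_def)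
        have bdxy: "x n = y n" if "n \<in> bdry F" for n
          using bd that by (auto simp: ax yb restr_def bdry_def)
        define z where "z n = (if n \<in> F then y n else x n)" for n
        have zX: "z \<in> X"
        proof -
          have "z n \<in> A \<times> B" for n using Xval[OF x] Xval[OF y] by (simp add: z_def)
          moreover have "(fst (z n) \<in> A0 \<and> fst (z (n + unitvec i)) \<in> A0) \<or> snd (z n) = snd (z (n + unitvec i))" for n i
          proof -
            have ex: "(fst (x n) \<in> A0 \<and> fst (x (n + unitvec i)) \<in> A0) \<or> snd (x n) = snd (x (n + unitvec i))"
              by (rule Xedge[OF x])
            have ey: "(fst (y n) \<in> A0 \<and> fst (y (n + unitvec i)) \<in> A0) \<or> snd (y n) = snd (y (n + unitvec i))"
              by (rule Xedge[OF y])
            have c1: "n \<in> F \<Longrightarrow> n + unitvec i \<notin> F \<Longrightarrow> x n = y n"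
              using nbd(1)[of n i] bdxy by blast
            have c2: "n \<notin> F \<Longrightarrow> n + unitvec i \<in> F \<Longrightarrow> x (n + unitvec i) = y (n + unitvec i)"
              using nbd(2)[of "n + unitvec i" i] bdxy by auto
            show ?thesis using ex ey c1 c2 unfolding z_def by (cases "n \<in> F"; cases "n + unitvec i \<in> F") auto
          qed
          ultimately show ?thesis by (simp add: X_def beach_def)
        qed
        have tl: "(x, z) \<in> tail_rel X" using x zX finF by (auto simp: tail_rel_def z_def)
        have "Psi x z = (\<Sum>j\<in>F. sharp (z j) - sharp (x j))"
          unfolding Psi_def by (rule sum.mono_neutral_left[OF finF]) (auto simp: z_def)
        also have "\<dots> = v" unfolding v Psi_pat_def by (rule sum.cong) (auto simp: z_def ax yb restr_def)
        finally show "v \<in> group_closure {Psi x y | x y. (x, y) \<in> tail_rel X}"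
          using tl by (blast intro: group_closure.base)
      qed
    qed
  qed
qed

end
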